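(* For each $\star\in\{\varepsilon,\sigma_0,*,\bowtie\}$, the edge-colored posets $L^{\mathrm{skew}}_{A_{n-1}}((P/Q)^\star)$ and $L^{\mathrm{skew}}_{A_{n-1}}(P/Q)^\star$ are isomorphic (by an isomorphism preserving order and edge colors).
   Context: Fix integers $m\ge n\ge 2$ and weakly decreasing $m$-tuples of nonnegative integers $P=(P_1,\dots,P_m)$ and $Q=(Q_1,\dots,Q_m)$ with $Q_r\le P_r$ for all $r$. The skew shape $P/Q$ is the set of cells $(r,c)$ (row $r$, column $c$, matrix convention) with $Q_r<c\le P_r$; assume no column of $P/Q$ contains more than $n$ cells. For any finite set of cells forming a skew shape (after translation), $L^{\mathrm{skew}}_{A_{n-1}}(\cdot)$ is the set of semistandard fillings with entries in $\{1,\dots,n\}$ (weakly increasing along rows, strictly increasing down columns), ordered by $S\le T$ iff $S_{r,c}\ge T_{r,c}$ for all cells; the covering $S\to T$ where $S,T$ differ only in cell $(r,c)$ with $S_{r,c}=T_{r,c}+1$ gets color $T_{r,c}\in\{1,\dots,n-1\}$. Shape operations: $(P/Q)^\varepsilon:=P/Q$; $(P/Q)^{\sigma_0}$: for each column of $P/Q$ whose cells are in rows $a+1,\dots,a+k$ ($k\ge1$), take the cells of that column in rows $a+k+1,\dots,a+n$ (the empty columns of $P/Q$ contribute nothing); $(P/Q)^*$: rotate $(P/Q)^{\sigma_0}$ by $180^\circ$; $(P/Q)^{\bowtie}$: rotate $P/Q$ by $180^\circ$ (all regarded as skew shapes after translation). Poset operations on a finite poset $R$ with edges colored by $\{1,\dots,n-1\}$: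 $R^\varepsilon:=R$; $R^{\sigma_0}$: same poset, each edge color $i$ replaced by $n-i$; $R^*$: the dual poset $\{t^*\}$ with an edge $t^*\xrightarrow{i}s^*$ for each edge $s\xrightarrow{i}t$ of $R$; $R^{\bowtie}:=(R^{\sigma_0})^*$. *)

theory Defs
  imports Main
begin

type_synonym cell = "int \<times> int"   (* (row, column), matrix convention *)
type_synonym filling = "cell \<Rightarrow> nat"

record 'a cposet =
  carrier :: "'a set"
  le :: "'a \<Rightarrow> 'a \<Rightarrow> bool"
  edge :: "'a \<Rightarrow> nat \<Rightarrow> 'a \<Rightarrow> bool"

definition cposet_iso :: "'a cposet \<Rightarrow> 'b cposet \<Rightarrow> bool" where
  "cposet_iso R S \<longleftrightarrow> (\<exists>f. bij_betw f (carrier R) (carrier S) \<and>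
     (\<forall>x\<in>carrier R. \<forall>y\<in>carrier R. le R x y \<longleftrightarrow> le S (f x) (f y)) \<and>
     (\<forall>x\<in>carrier R. \<forall>y\<in>carrier R. \<forall>i. edge R x i y \<longleftrightarrow> edge S (f x) i (f y)))"

text \<open>The skew shape P/Q; P, Q are m-tuples given as lists, rows indexed 1..m.\<close>
definition skew_shape :: "nat list \<Rightarrow> nat list \<Rightarrow> cell set" where
  "skew_shape P Q = {(r, c). 1 \<le> r \<and> r \<le> int (length P) \<and>
      int (Q ! nat (r - 1)) < c \<and> c \<le> int (P ! nat (r - 1))}"

text \<open>Semistandard fillings of a finite set of cells with entries in {1..n}
  (0 outside the shape, for uniqueness of representation).\<close>
definition ssyt :: "nat \<Rightarrow> cell set \<Rightarrow> filling set" where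
  "ssyt n D = {T. (\<forall>x\<in>D. 1 \<le> T x \<and> T x \<le> n) \<and> (\<forall>x. x \<notin> D \<longrightarrow> T x = 0) \<and>
     (\<forall>r c c'. (r, c) \<in> D \<longrightarrow> (r, c') \<in> D \<longrightarrow> c < c' \<longrightarrow> T (r, c) \<le> T (r, c')) \<and>
     (\<forall>r r' c. (r, c) \<in> D \<longrightarrow> (r', c) \<in> D \<longrightarrow> r < r' \<longrightarrow> T (r, c) < T (r', c))}"

definition L_skew :: "nat \<Rightarrow> cell set \<Rightarrow> filling cposet" where
  "L_skew n D = \<lparr> carrier = ssyt n D,
     le = (\<lambda>S T. \<forall>x\<in>D. S x \<ge> T x),
     edge = (\<lambda>S i T. S \<in> ssyt n D \<and> T \<in> ssyt n D \<and>
        (\<exists>x\<in>D. S x = T x + 1 \<and> T x = i \<and> (\<forall>y. y \<noteq> x \<longrightarrow> S y = T y))) \<rparr>"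

datatype sym = Eps | Sigma0 | Star | Bowtie

definition col_rows :: "cell set \<Rightarrow> int \<Rightarrow> int set" where
  "col_rows D c = {r. (r, c) \<in> D}"

definition shape_sigma0 :: "nat \<Rightarrow> cell set \<Rightarrow> cell set" where
  "shape_sigma0 n D = {(r, c). col_rows D c \<noteq> {} \<and>
      Max (col_rows D c) < r \<and> r \<le> Min (col_rows D c) - 1 + int n}"

definition rot180 :: "cell set \<Rightarrow> cell set" where
  "rot180 D = (\<lambda>(r, c). (- r, - c)) ` D"

fun shape_op :: "nat \<Rightarrow> sym \<Rightarrow> cell set \<Rightarrow> cell set" where
  "shape_op n Eps D = D"
| "shape_op n Sigma0 D = shape_sigma0 n D"
| "shape_op n Star D = rot180 (shape_sigma0 n D)"
| "shape_op n Bowtie D = rot180 D"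

definition poset_sigma0 :: "nat \<Rightarrow> 'a cposet \<Rightarrow> 'a cposet" where
  "poset_sigma0 n R = R\<lparr> edge := (\<lambda>s i t. 1 \<le> i \<and> i < n \<and> edge R s (n - i) t) \<rparr>"

definition poset_dual :: "'a cposet \<Rightarrow> 'a cposet" where
  "poset_dual R = \<lparr> carrier = carrier R, le = (\<lambda>x y. le R y x),
      edge = (\<lambda>t i s. edge R s i t) \<rparr>"

fun poset_op :: "nat \<Rightarrow> sym \<Rightarrow> 'a cposet \<Rightarrow> 'a cposet" where
  "poset_op n Eps R = R"
| "poset_op n Sigma0 R = poset_sigma0 n R"
| "poset_op n Star R = poset_dual R"
| "poset_op n Bowtie R = poset_dual (poset_sigma0 n R)"

end

theory Submission
  imports Defs
begin


definition cnt :: "int \<Rightarrow> int \<Rightarrow> (int \<Rightarrow> nat) \<Rightarrow> nat \<Rightarrow> int" where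
 "cnt a b g t = a + int (card {r. a < r \<and> r \<le> b \<and> g r \<le> t})"

definition fil :: "nat \<Rightarrow> (nat \<Rightarrow> int) \<Rightarrow> int \<Rightarrow> nat" where
 "fil n N r = card {t. t < n \<and> N t < r}"

definition colok :: "nat \<Rightarrow> int \<Rightarrow> int \<Rightarrow> (int \<Rightarrow> nat) \<Rightarrow> bool" where
 "colok n a b g \<longleftrightarrow> (\<forall>r. a < r \<and> r \<le> b \<longrightarrow> 1 \<le> g r \<and> g r \<le> n) \<and>
    (\<forall>r r'. a < r \<longrightarrow> r < r' \<longrightarrow> r' \<le> b \<longrightarrow> g r < g r')"

definition pathok :: "nat \<Rightarrow> int \<Rightarrow> int \<Rightarrow> (nat \<Rightarrow> int) \<Rightarrow> bool" where
 "pathok n a b N \<longleftrightarrow> N 0 = a \<and> N n = b \<and> (\<forall>t<n. N t \<le> N (Suc t) \<and> N (Suc t) \<le> N t + 1)"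

lemma cnt_set_sub: "{r. a < r \<and> r \<le> b \<and> g r \<le> t} \<subseteq> {a<..b}" by auto

lemma cnt_bounds:
  assumes "a \<le> b" shows "a \<le> cnt a b g t" "cnt a b g t \<le> b"
proof -
  have "card {r. a < r \<and> r \<le> b \<and> g r \<le> t} \<le> card {a<..b}"
    by (rule card_mono) auto
  then show "cnt a b g t \<le> b" using assms by (simp add: cnt_def)
qed (simp add: cnt_def)

lemma cnt_iff:
  assumes "colok n a b g" "a < r" "r \<le> b"
  shows "g r \<le> t \<longleftrightarrow> r \<le> cnt a b g t"
proof
  assume h: "g r \<le> t"
  have "{a<..r} \<subseteq> {r. a < r \<and> r \<le> b \<and> g r \<le> t}"
  proof
    fix r' assume "r' \<in> {a<..r}"
    then have "a < r'" "r' \<le> r" by auto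
    moreover have "g r' \<le> g r"
      using assms(1) \<open>a < r'\<close> \<open>r' \<le> r\<close> assms(3) unfolding colok_def
      by (cases "r' = r") (auto simp: less_imp_le)
    ultimately show "r' \<in> {r. a < r \<and> r \<le> b \<and> g r \<le> t}" using h assms(3) by auto
  qed
  then have "card {a<..r} \<le> card {r. a < r \<and> r \<le> b \<and> g r \<le> t}"
    by (rule card_mono[rotated]) (rule finite_subset[OF cnt_set_sub], simp)
  then show "r \<le> cnt a b g t" using assms(2) by (simp add: cnt_def)
next
  assume h: "r \<le> cnt a b g t"
  show "g r \<le> t"
  proof (rule ccontr)
    assume "\<not> g r \<le> t"
    have "{r. a < r \<and> r \<le> b \<and> g r \<le> t} \<subseteq> {a<..<r}"
    proof
      fix r' assume "r' \<in> {r. a < r \<and> r \<le> b \<and> g r \<le> t}"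
      then have r': "a < r'" "r' \<le> b" "g r' \<le> t" by auto
      have "r' < r"
      proof (rule ccontr)
        assume "\<not> r' < r"
        then have "g r \<le> g r'" using assms r' unfolding colok_def
          by (cases "r' = r") (auto simp: less_imp_le)
        then show False using \<open>\<not> g r \<le> t\<close> r' by simp
      qed
      then show "r' \<in> {a<..<r}" using r' by auto
    qed
    then have "card {r. a < r \<and> r \<le> b \<and> g r \<le> t} \<le> card {a<..<r}"
      by (rule card_mono[rotated]) simp
    then show False using h assms(2) by (simp add: cnt_def)
  qed
qed

lemma colok_ge1: "colok n a b g \<Longrightarrow> a < r \<Longrightarrow> r \<le> b \<Longrightarrow> 1 \<le> g r"
  and colok_len: "colok n a b g \<Longrightarrow> a < r \<Longrightarrow> r \<le> b \<Longrightarrow> g r \<le> n"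
  and colok_strict: "colok n a b g \<Longrightarrow> a < r \<Longrightarrow> r < r' \<Longrightarrow> r' \<le> b \<Longrightarrow> g r < g r'"
  unfolding colok_def by auto

lemma cnt_mono: "a \<le> b \<Longrightarrow> t \<le> t' \<Longrightarrow> cnt a b g t \<le> cnt a b g t'"
  unfolding cnt_def
  by (simp, rule card_mono, rule finite_subset[OF cnt_set_sub], auto)

lemma cnt_path:
  assumes "colok n a b g" "a \<le> b"
  shows "pathok n a b (cnt a b g)"
proof -
  have E0: "{r. a < r \<and> r \<le> b \<and> g r \<le> 0} = {}" using colok_ge1[OF assms(1)] by force
  have 0: "cnt a b g 0 = a" unfolding cnt_def E0 by simp
  have "{r. a < r \<and> r \<le> b \<and> g r \<le> n} = {a<..b}" using colok_len[OF assms(1)] by force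
  then have 1: "cnt a b g n = b" using assms(2) by (simp add: cnt_def)
  have 2: "cnt a b g (Suc t) \<le> cnt a b g t + 1" for t
  proof (rule ccontr)
    assume nt: "\<not> ?thesis"
    define r0 where "r0 = cnt a b g t + 1"
    have "a < r0" "r0 + 1 \<le> b" using cnt_bounds[OF assms(2), of g "Suc t"] cnt_bounds[OF assms(2), of g t]
      nt by (auto simp: r0_def)
    have "g r0 \<le> Suc t" "g (r0+1) \<le> Suc t"
      using cnt_iff[OF assms(1)] \<open>a < r0\<close> \<open>r0 + 1 \<le> b\<close> nt by (auto simp: r0_def)
    moreover have "\<not> g r0 \<le> t" using cnt_iff[OF assms(1)] \<open>a < r0\<close> \<open>r0 + 1 \<le> b\<close>
      by (auto simp: r0_def)
    moreover have "g r0 < g (r0+1)" using colok_strict[OF assms(1)] \<open>a < r0\<close> \<open>r0 + 1 \<le> b\<close> by auto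
    ultimately show False by simp
  qed
  show ?thesis unfolding pathok_def using 0 1 2 cnt_mono[OF assms(2)] by auto
qed

lemma path_mono:
  assumes "pathok n a b N" "t \<le> t'" "t' \<le> n"
  shows "N t \<le> N t'"
  using assms(2,3)
proof (induction t' rule: dec_induct)
  case (step k)
  have "k < n" using step.prems by simp
  then have "N k \<le> N (Suc k)" using assms(1) unfolding pathok_def by auto
  then show ?case using step.IH \<open>k < n\<close> by simp
qed simp

lemma path_ab: "pathok n a b N \<Longrightarrow> a \<le> b"
  using path_mono[of n a b N 0 n] unfolding pathok_def by auto

lemma fil_iff:
  assumes "pathok n a b N" "a < r" "r \<le> b" "t \<le> n"
  shows "fil n N r \<le> t \<longleftrightarrow> r \<le> N t"
proof
  assume "r \<le> N t"
  have "{t'. t' < n \<and> N t' < r} \<subseteq> {..<t}"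
  proof
    fix t' assume "t' \<in> {t'. t' < n \<and> N t' < r}"
    then show "t' \<in> {..<t}" using path_mono[OF assms(1), of t t'] \<open>r \<le> N t\<close> by force
  qed
  then show "fil n N r \<le> t" unfolding fil_def using card_mono[of "{..<t}"] by fastforce
next
  assume h: "fil n N r \<le> t"
  show "r \<le> N t"
  proof (rule ccontr)
    assume "\<not> r \<le> N t"
    then have "t < n" using assms unfolding pathok_def by (cases "t = n") auto
    have "{..t} \<subseteq> {t'. t' < n \<and> N t' < r}"
      using path_mono[OF assms(1), of _ t] \<open>t < n\<close> \<open>\<not> r \<le> N t\<close> by fastforce
    then have "card {..t} \<le> fil n N r" unfolding fil_def by (rule card_mono[rotated]) simp
    then show False using h by simp
  qed
qed

lemma fil_colok:
  assumes "pathok n a b N"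
  shows "colok n a b (fil n N)"
  unfolding colok_def
proof (intro conjI allI impI)
  fix r assume r: "a < r \<and> r \<le> b"
  show "1 \<le> fil n N r" using fil_iff[OF assms, of r 0] r assms unfolding pathok_def by auto
  show "fil n N r \<le> n" unfolding fil_def using card_mono[of "{..<n}" "{t. t < n \<and> N t < r}"] by auto
next
  fix r r' assume r: "a < r" "r < r'" "r' \<le> b"
  show "fil n N r < fil n N r'"
  proof (rule ccontr)
    assume nt: "\<not> ?thesis"
    define t where "t = fil n N r"
    have tn: "t \<le> n" unfolding t_def fil_def using card_mono[of "{..<n}" "{t. t < n \<and> N t < r}"] by auto
    have "r' \<le> N t" using fil_iff[OF assms, of r' t] r nt tn by (auto simp: t_def)
    have "t \<ge> 1" using fil_iff[OF assms, of r 0] r assms unfolding pathok_def t_def by auto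
    have "\<not> fil n N r \<le> t - 1" using \<open>t\<ge>1\<close> by (simp add: t_def)
    then have "\<not> r \<le> N (t - 1)" using fil_iff[OF assms, of r "t-1"] r tn by simp
    moreover have "N t \<le> N (t-1) + 1" using assms \<open>t \<ge> 1\<close> tn unfolding pathok_def
      by (metis Suc_diff_1 Suc_le_lessD diff_less less_one not_le)
    ultimately show False using \<open>r' \<le> N t\<close> r by simp
  qed
qed

lemma cnt_fil:
  assumes "pathok n a b N" "t \<le> n"
  shows "cnt a b (fil n N) t = N t"
proof -
  have ab: "N 0 \<le> N t" "N t \<le> N n" using path_mono[OF assms(1)] assms(2) by auto
  have "{r. a < r \<and> r \<le> b \<and> fil n N r \<le> t} = {a<..N t}"
    using fil_iff[OF assms(1) _ _ assms(2)] ab assms(1) unfolding pathok_def by auto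
  then show ?thesis using ab assms(1) unfolding cnt_def pathok_def by simp
qed

lemma fil_cnt:
  assumes "colok n a b g" "a < r" "r \<le> b"
  shows "fil n (cnt a b g) r = g r"
proof -
  have "{t. t < n \<and> cnt a b g t < r} = {..<g r}"
  proof (intro set_eqI iffI)
    fix t assume "t \<in> {t. t < n \<and> cnt a b g t < r}"
    then show "t \<in> {..<g r}" using cnt_iff[OF assms, of t] by auto
  next
    fix t assume "t \<in> {..<g r}"
    then show "t \<in> {t. t < n \<and> cnt a b g t < r}"
      using cnt_iff[OF assms, of t] colok_len[OF assms] by auto
  qed
  then show ?thesis unfolding fil_def by simp
qed

lemma col_le_iff:
  assumes "colok n a b g" "colok n a b h"
  shows "(\<forall>r. a < r \<and> r \<le> b \<longrightarrow> h r \<le> g r) \<longleftrightarrow> (\<forall>t\<le>n. cnt a b g t \<le> cnt a b h t)"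
proof
  assume H: "\<forall>r. a < r \<and> r \<le> b \<longrightarrow> h r \<le> g r"
  show "\<forall>t\<le>n. cnt a b g t \<le> cnt a b h t"
    unfolding cnt_def using H
    by (auto intro!: card_mono finite_subset[OF cnt_set_sub] dest: order_trans)
next
  assume H: "\<forall>t\<le>n. cnt a b g t \<le> cnt a b h t"
  show "\<forall>r. a < r \<and> r \<le> b \<longrightarrow> h r \<le> g r"
  proof (intro allI impI)
    fix r assume r: "a < r \<and> r \<le> b"
    have "r \<le> cnt a b g (g r)" using cnt_iff[OF assms(1)] r by auto
    also have "\<dots> \<le> cnt a b h (g r)" using H colok_len[OF assms(1)] r by auto
    finally show "h r \<le> g r" using cnt_iff[OF assms(2)] r by auto
  qed
qed

lemma col_edge_iff:
  assumes g: "colok n a b g" and h: "colok n a b h" and ab: "a \<le> b"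
  shows "(\<exists>r0. a < r0 \<and> r0 \<le> b \<and> g r0 = h r0 + 1 \<and> h r0 = i \<and>
            (\<forall>r. a < r \<and> r \<le> b \<and> r \<noteq> r0 \<longrightarrow> g r = h r))
     \<longleftrightarrow> (i \<le> n \<and> (\<forall>t\<le>n. cnt a b h t = cnt a b g t + (if t = i then 1 else 0)))"
proof
  assume "\<exists>r0. a < r0 \<and> r0 \<le> b \<and> g r0 = h r0 + 1 \<and> h r0 = i \<and>
            (\<forall>r. a < r \<and> r \<le> b \<and> r \<noteq> r0 \<longrightarrow> g r = h r)"
  then obtain r0 where r0: "a < r0" "r0 \<le> b" "g r0 = h r0 + 1" "h r0 = i"
    and oth: "\<forall>r. a < r \<and> r \<le> b \<and> r \<noteq> r0 \<longrightarrow> g r = h r" by blast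
  have "i \<le> n" using colok_len[OF h r0(1,2)] r0 by simp
  moreover have "cnt a b h t = cnt a b g t + (if t = i then 1 else 0)" for t
  proof (cases "t = i")
    case True
    have e: "{r. a < r \<and> r \<le> b \<and> h r \<le> t} = insert r0 {r. a < r \<and> r \<le> b \<and> g r \<le> t}"
    proof (rule set_eqI)
      fix r show "r \<in> {r. a < r \<and> r \<le> b \<and> h r \<le> t} \<longleftrightarrow> r \<in> insert r0 {r. a < r \<and> r \<le> b \<and> g r \<le> t}"
        using oth[rule_format, of r] r0 True by (cases "r = r0") auto
    qed
    have "r0 \<notin> {r. a < r \<and> r \<le> b \<and> g r \<le> t}" using r0 True by auto
    moreover have "finite {r. a < r \<and> r \<le> b \<and> g r \<le> t}" by (rule finite_subset[OF cnt_set_sub]) simp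
    ultimately show ?thesis unfolding cnt_def e using True by simp
  next
    case False
    have e: "{r. a < r \<and> r \<le> b \<and> h r \<le> t} = {r. a < r \<and> r \<le> b \<and> g r \<le> t}"
    proof (rule set_eqI)
      fix r show "r \<in> {r. a < r \<and> r \<le> b \<and> h r \<le> t} \<longleftrightarrow> r \<in> {r. a < r \<and> r \<le> b \<and> g r \<le> t}"
        using oth[rule_format, of r] r0 False by (cases "r = r0") auto
    qed
    show ?thesis unfolding cnt_def e using False by simp
  qed
  ultimately show "i \<le> n \<and> (\<forall>t\<le>n. cnt a b h t = cnt a b g t + (if t = i then 1 else 0))" by simp
next
  assume H: "i \<le> n \<and> (\<forall>t\<le>n. cnt a b h t = cnt a b g t + (if t = i then 1 else 0))"
  have A: "h r \<le> g r" if "a < r" "r \<le> b" for r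
  proof -
    have "r \<le> cnt a b g (g r)" using cnt_iff[OF g] that by auto
    also have "\<dots> \<le> cnt a b h (g r)" using H colok_len[OF g] that by auto
    finally show ?thesis using cnt_iff[OF h] that by auto
  qed
  have B: "h r \<le> t \<Longrightarrow> g r \<le> t" if "a < r" "r \<le> b" "t \<le> n" "t \<noteq> i" for r t
    using cnt_iff[OF g that(1,2), of t] cnt_iff[OF h that(1,2), of t] H that by auto
  define r0 where "r0 = cnt a b h i"
  have "i \<noteq> n"
  proof
    assume "i = n"
    have "cnt a b h n = b" "cnt a b g n = b" using cnt_path[OF h ab] cnt_path[OF g ab] unfolding pathok_def by auto
    then show False using H \<open>i = n\<close> by auto
  qed
  then have "i < n" using H by simp
  have hi: "cnt a b h i = cnt a b g i + 1" using H by simp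
  have r0b: "a < r0" "r0 \<le> b" using cnt_bounds[OF ab, of h i] cnt_bounds[OF ab, of g i] hi by (auto simp: r0_def)
  have "h r0 \<le> i" using cnt_iff[OF h r0b] by (simp add: r0_def)
  have "\<not> g r0 \<le> i" using cnt_iff[OF g r0b] hi by (simp add: r0_def)
  have hr0: "h r0 = i"
  proof (rule ccontr)
    assume "h r0 \<noteq> i"
    then have "h r0 < i" using \<open>h r0 \<le> i\<close> by simp
    then have "g r0 \<le> h r0" using B[OF r0b, of "h r0"] H by simp
    then show False using \<open>\<not> g r0 \<le> i\<close> \<open>h r0 < i\<close> by simp
  qed
  have gr0: "g r0 = i + 1"
    using B[OF r0b, of "i+1"] \<open>i < n\<close> hr0 \<open>\<not> g r0 \<le> i\<close> by simp
  have oth: "g r = h r" if "a < r" "r \<le> b" "r \<noteq> r0" for r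
  proof (rule ccontr)
    assume "g r \<noteq> h r"
    then have "h r < g r" using A[OF that(1,2)] by simp
    then have "h r = i" using B[OF that(1,2), of "h r"] colok_len[OF h that(1,2)] by force
    then have "r \<le> r0" using cnt_iff[OF h that(1,2), of i] by (simp add: r0_def)
    moreover have "\<not> r \<le> cnt a b g i" using cnt_iff[OF g that(1,2), of i] \<open>h r < g r\<close> \<open>h r = i\<close> by simp
    ultimately show False using that(3) hi by (simp add: r0_def)
  qed
  show "\<exists>r0. a < r0 \<and> r0 \<le> b \<and> g r0 = h r0 + 1 \<and> h r0 = i \<and>
            (\<forall>r. a < r \<and> r \<le> b \<and> r \<noteq> r0 \<longrightarrow> g r = h r)"
    using r0b hr0 gr0 oth by auto
qed




definition cols :: "int set \<Rightarrow> (int \<Rightarrow> int) \<Rightarrow> (int \<Rightarrow> int) \<Rightarrow> cell set" where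
  "cols C a b = {(r, c). c \<in> C \<and> a c < r \<and> r \<le> b c}"

definition kap :: "(int \<Rightarrow> int) \<Rightarrow> (int \<Rightarrow> int) \<Rightarrow> filling \<Rightarrow> int \<Rightarrow> nat \<Rightarrow> int" where
  "kap a b T c = cnt (a c) (b c) (\<lambda>r. T (r, c))"

definition build :: "nat \<Rightarrow> int set \<Rightarrow> (int \<Rightarrow> int) \<Rightarrow> (int \<Rightarrow> int) \<Rightarrow> (int \<Rightarrow> nat \<Rightarrow> int) \<Rightarrow> filling" where
  "build n C a b N = (\<lambda>(r, c). if c \<in> C \<and> a c < r \<and> r \<le> b c then fil n (N c) r else 0)"

definition good :: "nat \<Rightarrow> int set \<Rightarrow> (int \<Rightarrow> int) \<Rightarrow> (int \<Rightarrow> int) \<Rightarrow> bool" where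
  "good n C a b \<longleftrightarrow> (\<forall>c\<in>C. a c \<le> b c \<and> b c \<le> a c + int n) \<and>
     (\<forall>c\<in>C. \<forall>c'\<in>C. c < c' \<longrightarrow> a c' \<le> a c \<and> b c' \<le> b c)"

lemma good_ab: "good n C a b \<Longrightarrow> c \<in> C \<Longrightarrow> a c \<le> b c"
  and good_anti: "good n C a b \<Longrightarrow> c \<in> C \<Longrightarrow> c' \<in> C \<Longrightarrow> c < c' \<Longrightarrow> a c' \<le> a c \<and> b c' \<le> b c"
  unfolding good_def by auto

lemma cnt_cong: "(\<And>r. a < r \<Longrightarrow> r \<le> b \<Longrightarrow> g r = g' r) \<Longrightarrow> cnt a b g t = cnt a b g' t"
  unfolding cnt_def by (rule arg_cong[where f="\<lambda>x. a + int (card x)"]) auto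

lemma fil_cong: "(\<And>t. t < n \<Longrightarrow> N t = N' t) \<Longrightarrow> fil n N r = fil n N' r"
  unfolding fil_def by (rule arg_cong[where f=card]) auto

lemma cols_mem: "(r, c) \<in> cols C a b \<longleftrightarrow> c \<in> C \<and> a c < r \<and> r \<le> b c"
  unfolding cols_def by simp

lemma ssyt_colok:
  assumes "T \<in> ssyt n (cols C a b)" "c \<in> C"
  shows "colok n (a c) (b c) (\<lambda>r. T (r, c))"
  using assms unfolding ssyt_def colok_def cols_def by auto

lemma ssyt_zero: "T \<in> ssyt n D \<Longrightarrow> x \<notin> D \<Longrightarrow> T x = 0"
  unfolding ssyt_def by (cases x) auto

lemma ssyt_row:
  assumes gd: "good n C a b" and T: "T \<in> ssyt n (cols C a b)"
    and c: "c \<in> C" "c' \<in> C" "c < c'"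
  shows "kap a b T c' t \<le> kap a b T c t"
proof (rule ccontr)
  assume nt: "\<not> ?thesis"
  define r where "r = kap a b T c' t"
  have an: "a c' \<le> a c \<and> b c' \<le> b c" using good_anti[OF gd c] .
  have b1: "a c \<le> kap a b T c t" "kap a b T c' t \<le> b c'"
    using cnt_bounds[OF good_ab[OF gd c(1)]] cnt_bounds[OF good_ab[OF gd c(2)]] unfolding kap_def by auto
  have r1: "a c' < r" "r \<le> b c'" "a c < r" "r \<le> b c" using b1 an nt by (auto simp: r_def)
  have "T (r, c') \<le> t" using cnt_iff[OF ssyt_colok[OF T c(2)] r1(1,2)] by (simp add: r_def kap_def)
  moreover have "\<not> T (r, c) \<le> t" using cnt_iff[OF ssyt_colok[OF T c(1)] r1(3,4)] nt
    by (simp add: r_def kap_def)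
  moreover have "T (r, c) \<le> T (r, c')" using T r1 c unfolding ssyt_def cols_def by auto
  ultimately show False by simp
qed

lemma ssyt_le:
  assumes gd: "good n C a b" and S: "S \<in> ssyt n (cols C a b)" and T: "T \<in> ssyt n (cols C a b)"
  shows "(\<forall>x\<in>cols C a b. T x \<le> S x) \<longleftrightarrow> (\<forall>c\<in>C. \<forall>t\<le>n. kap a b S c t \<le> kap a b T c t)"
proof -
  have "(\<forall>x\<in>cols C a b. T x \<le> S x) \<longleftrightarrow> (\<forall>c\<in>C. \<forall>r. a c < r \<and> r \<le> b c \<longrightarrow> T (r, c) \<le> S (r, c))"
    unfolding cols_def by auto
  also have "\<dots> \<longleftrightarrow> (\<forall>c\<in>C. \<forall>t\<le>n. kap a b S c t \<le> kap a b T c t)"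
    unfolding kap_def using col_le_iff[OF ssyt_colok[OF S] ssyt_colok[OF T]] by auto
  finally show ?thesis .
qed

lemma build_ssyt:
  assumes gd: "good n C a b" and P: "\<forall>c\<in>C. pathok n (a c) (b c) (N c)"
    and R: "\<forall>c\<in>C. \<forall>c'\<in>C. c < c' \<longrightarrow> (\<forall>t\<le>n. N c' t \<le> N c t)"
  shows "build n C a b N \<in> ssyt n (cols C a b)"
  unfolding ssyt_def
proof (intro CollectI conjI allI ballI impI)
  fix x assume "x \<in> cols C a b"
  then obtain r c where x: "x = (r, c)" "c \<in> C" "a c < r" "r \<le> b c" unfolding cols_def by auto
  show "1 \<le> build n C a b N x" "build n C a b N x \<le> n"
    using fil_colok[OF P[rule_format, OF x(2)]] x unfolding colok_def build_def by auto
next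
  fix x assume "x \<notin> cols C a b" then show "build n C a b N x = 0"
    unfolding cols_def build_def by (auto split: prod.splits)
next
  fix r c c' assume h: "(r, c) \<in> cols C a b" "(r, c') \<in> cols C a b" "c < c'"
  then have hc: "c \<in> C" "a c < r" "r \<le> b c" "c' \<in> C" "a c' < r" "r \<le> b c'" unfolding cols_def by auto
  define t where "t = fil n (N c') r"
  have tn: "t \<le> n" using fil_colok[OF P[rule_format, OF hc(4)]] hc unfolding colok_def t_def by auto
  have "r \<le> N c' t" using fil_iff[OF P[rule_format, OF hc(4)] hc(5,6) tn] by (simp add: t_def)
  also have "\<dots> \<le> N c t" using R hc h(3) tn by auto
  finally have "fil n (N c) r \<le> t" using fil_iff[OF P[rule_format, OF hc(1)] hc(2,3) tn] by simp
  then show "build n C a b N (r, c) \<le> build n C a b N (r, c')"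
    using hc unfolding build_def t_def by simp
next
  fix r r' c assume h: "(r, c) \<in> cols C a b" "(r', c) \<in> cols C a b" "r < r'"
  then show "build n C a b N (r, c) < build n C a b N (r', c)"
    using fil_colok[OF P[rule_format, of c]] unfolding cols_def build_def colok_def by auto
qed

lemma kap_build:
  assumes P: "\<forall>c\<in>C. pathok n (a c) (b c) (N c)" and c: "c \<in> C" and t: "t \<le> n"
  shows "kap a b (build n C a b N) c t = N c t"
proof -
  have "kap a b (build n C a b N) c t = cnt (a c) (b c) (fil n (N c)) t"
    unfolding kap_def by (rule cnt_cong) (simp add: build_def c)
  also have "\<dots> = N c t" using cnt_fil[OF P[rule_format, OF c] t] .
  finally show ?thesis .
qed

lemma build_kap:
  assumes T: "T \<in> ssyt n (cols C a b)" and gd: "good n C a b"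
    and N: "\<forall>c\<in>C. \<forall>t\<le>n. N c t = kap a b T c t"
  shows "build n C a b N = T"
proof
  fix x :: cell obtain r c where x: "x = (r, c)" by force
  show "build n C a b N x = T x"
  proof (cases "c \<in> C \<and> a c < r \<and> r \<le> b c")
    case True
    have "build n C a b N x = fil n (N c) r" using True x by (simp add: build_def)
    also have "\<dots> = fil n (kap a b T c) r" by (rule fil_cong) (use N True in auto)
    also have "\<dots> = T x" unfolding kap_def using fil_cnt[OF ssyt_colok[OF T] ] True x by auto
    finally show ?thesis .
  next
    case False
    then have "x \<notin> cols C a b" using x by (simp add: cols_def)
    then show ?thesis using ssyt_zero[OF T, of x] x False by (auto simp: build_def)
  qed
qed

lemma col_eq_kap:
  assumes "T \<in> ssyt n (cols C a b)" "S \<in> ssyt n (cols C a b)" "c \<in> C"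
    "\<forall>t\<le>n. kap a b T c t = kap a b S c t" "a c < r" "r \<le> b c"
  shows "S (r, c) = T (r, c)"
  using col_le_iff[OF ssyt_colok[OF assms(1,3)] ssyt_colok[OF assms(2,3)]]
    col_le_iff[OF ssyt_colok[OF assms(2,3)] ssyt_colok[OF assms(1,3)]] assms(4-6)
  unfolding kap_def by (metis order_antisym order_refl)

lemma edge_kap:
  assumes gd: "good n C a b" and S: "S \<in> ssyt n (cols C a b)" and T: "T \<in> ssyt n (cols C a b)"
  shows "(\<exists>x\<in>cols C a b. S x = T x + 1 \<and> T x = i \<and> (\<forall>y. y \<noteq> x \<longrightarrow> S y = T y))
    \<longleftrightarrow> (i \<le> n \<and> (\<exists>c\<in>C. \<forall>c'\<in>C. \<forall>t\<le>n. kap a b T c' t = kap a b S c' t + (if c' = c \<and> t = i then 1 else 0)))"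
proof
  assume "\<exists>x\<in>cols C a b. S x = T x + 1 \<and> T x = i \<and> (\<forall>y. y \<noteq> x \<longrightarrow> S y = T y)"
  then obtain r0 c0 where x: "c0 \<in> C" "a c0 < r0" "r0 \<le> b c0" "S (r0,c0) = T (r0,c0) + 1"
    "T (r0,c0) = i" and oth: "\<forall>y. y \<noteq> (r0,c0) \<longrightarrow> S y = T y" unfolding cols_def by auto
  have ce: "i \<le> n \<and> (\<forall>t\<le>n. kap a b T c0 t = kap a b S c0 t + (if t = i then 1 else 0))"
    using col_edge_iff[OF ssyt_colok[OF S x(1)] ssyt_colok[OF T x(1)] good_ab[OF gd x(1)], of i] x oth
    unfolding kap_def by blast
  have o2: "kap a b T c' t = kap a b S c' t" if "c' \<noteq> c0" for c' t
    unfolding kap_def by (rule cnt_cong) (use oth that in auto)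
  have "\<forall>c'\<in>C. \<forall>t\<le>n. kap a b T c' t = kap a b S c' t + (if c' = c0 \<and> t = i then 1 else 0)"
  proof (intro ballI allI impI)
    fix c' t assume "c' \<in> C" "t \<le> n"
    show "kap a b T c' t = kap a b S c' t + (if c' = c0 \<and> t = i then 1 else 0)"
      using o2[of c' t] ce \<open>t \<le> n\<close> by (cases "c' = c0") auto
  qed
  then show "i \<le> n \<and> (\<exists>c\<in>C. \<forall>c'\<in>C. \<forall>t\<le>n. kap a b T c' t = kap a b S c' t + (if c' = c \<and> t = i then 1 else 0))"
    using ce x(1) by blast
next
  assume "i \<le> n \<and> (\<exists>c\<in>C. \<forall>c'\<in>C. \<forall>t\<le>n. kap a b T c' t = kap a b S c' t + (if c' = c \<and> t = i then 1 else 0))"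
  then obtain c0 where c0: "c0 \<in> C" "i \<le> n" and
    H: "\<forall>c'\<in>C. \<forall>t\<le>n. kap a b T c' t = kap a b S c' t + (if c' = c0 \<and> t = i then 1 else 0)" by blast
  have "i \<le> n \<and> (\<forall>t\<le>n. cnt (a c0) (b c0) (\<lambda>r. T (r, c0)) t = cnt (a c0) (b c0) (\<lambda>r. S (r, c0)) t + (if t = i then 1 else 0))"
    using H c0 unfolding kap_def by auto
  then obtain r0 where r0: "a c0 < r0" "r0 \<le> b c0" "S (r0,c0) = T (r0,c0) + 1" "T (r0,c0) = i"
    and oth: "\<forall>r. a c0 < r \<and> r \<le> b c0 \<and> r \<noteq> r0 \<longrightarrow> S (r, c0) = T (r, c0)"
    using col_edge_iff[OF ssyt_colok[OF S c0(1)] ssyt_colok[OF T c0(1)] good_ab[OF gd c0(1)], of i] by blast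
  have "S y = T y" if "y \<noteq> (r0, c0)" for y
  proof -
    obtain r c where y: "y = (r, c)" by force
    show ?thesis
    proof (cases "y \<in> cols C a b")
      case False then show ?thesis using ssyt_zero[OF S] ssyt_zero[OF T] by simp
    next
      case True
      then have yc: "c \<in> C" "a c < r" "r \<le> b c" using y by (auto simp: cols_def)
      show ?thesis
      proof (cases "c = c0")
        case True then show ?thesis using oth yc that y by auto
      next
        case False
        then have "\<forall>t\<le>n. kap a b T c t = kap a b S c t" using H yc by auto
        then show ?thesis using col_eq_kap[OF T S yc(1) _ yc(2,3)] y by simp
      qed
    qed
  qed
  then show "\<exists>x\<in>cols C a b. S x = T x + 1 \<and> T x = i \<and> (\<forall>y. y \<noteq> x \<longrightarrow> S y = T y)"
    using r0 c0 by (intro bexI[of _ "(r0, c0)"]) (auto simp: cols_def)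
qed




lemma reidx_all: "(\<forall>s\<le>n. P (n - s)) \<longleftrightarrow> (\<forall>t\<le>(n::nat). P t)"
proof
  assume H: "\<forall>s\<le>n. P (n - s)"
  show "\<forall>t\<le>n. P t"
  proof (intro allI impI)
    fix t assume "t \<le> n" then show "P t" using H[rule_format, of "n - t"] by simp
  qed
qed auto

lemma reidx_edge:
  assumes "i \<le> n"
  shows "(\<forall>t\<le>n. (X t::int) = Y t + (if B \<and> t = i then 1 else 0)) \<longleftrightarrow>
    (\<forall>s\<le>n. X (n-s) - int (n-s) = Y (n-s) - int (n-s) + (if B \<and> s = n - i then 1 else 0))"
proof -
  have "(\<forall>t\<le>n. (X t::int) = Y t + (if B \<and> t = i then 1 else 0)) \<longleftrightarrow>
    (\<forall>s\<le>n. (X (n-s)::int) = Y (n-s) + (if B \<and> n - s = i then 1 else 0))"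
    using reidx_all[of n "\<lambda>t. (X t::int) = Y t + (if B \<and> t = i then 1 else 0)"] by simp
  also have "\<dots> \<longleftrightarrow> (\<forall>s\<le>n. X (n-s) - int (n-s) = Y (n-s) - int (n-s) + (if B \<and> s = n - i then 1 else 0))"
  proof -
    have "\<And>s. s \<le> n \<Longrightarrow> (n - s = i) = (s = n - i)" using assms by auto
    then show ?thesis by (auto simp del: of_nat_diff)
  qed
  finally show ?thesis .
qed

lemma good_dual: "good n C a b \<Longrightarrow> good n C b (\<lambda>c. a c + int n)"
  unfolding good_def by auto

lemma edge_range:
  assumes gd: "good n C a b" and S: "S \<in> ssyt n (cols C a b)" and T: "T \<in> ssyt n (cols C a b)"
    and E: "i \<le> n \<and> (\<exists>c\<in>C. \<forall>c'\<in>C. \<forall>t\<le>n. kap a b T c' t = kap a b S c' t + (if c' = c \<and> t = i then 1 else 0))"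
  shows "1 \<le> i \<and> i < n"
proof -
  obtain c where c: "c \<in> C" and H: "\<forall>t\<le>n. kap a b T c t = kap a b S c t + (if t = i then 1 else 0)"
    using E by fastforce
  have pS: "pathok n (a c) (b c) (kap a b S c)" and pT: "pathok n (a c) (b c) (kap a b T c)"
    unfolding kap_def using cnt_path ssyt_colok[OF S c] ssyt_colok[OF T c] good_ab[OF gd c] by auto
  have "i \<noteq> 0" using H[rule_format, of 0] pS pT unfolding pathok_def by (auto split: if_splits)
  moreover have "i \<noteq> n" using H[rule_format, of n] pS pT unfolding pathok_def by (auto split: if_splits)
  ultimately show ?thesis using E by auto
qed

theorem sigma0_iso:
  assumes gd: "good n C a b"
  shows "cposet_iso (L_skew n (cols C b (\<lambda>c. a c + int n))) (poset_sigma0 n (L_skew n (cols C a b)))"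
proof -
  define a' where "a' = (\<lambda>c. a c + int n)"
  have gd': "good n C b a'" using good_dual[OF gd] by (simp add: a'_def)
  define D where "D = cols C a b"
  define D' where "D' = cols C b a'"
  define NF where "NF T' = (\<lambda>c s. kap b a' T' c (n - s) - int (n - s))" for T'
  define NG where "NG T = (\<lambda>c t. int t + kap a b T c (n - t))" for T
  define F where "F T' = build n C a b (NF T')" for T'
  define G where "G T = build n C b a' (NG T)" for T
  have pF: "\<forall>c\<in>C. pathok n (a c) (b c) (NF T' c)" if T': "T' \<in> ssyt n D'" for T'
  proof
    fix c assume c: "c \<in> C"
    have p: "pathok n (b c) (a' c) (kap b a' T' c)"
      unfolding kap_def using cnt_path ssyt_colok[OF T'[unfolded D'_def] c] good_ab[OF gd' c] by auto
    show "pathok n (a c) (b c) (NF T' c)"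
      unfolding pathok_def
    proof (intro conjI allI impI)
      show "NF T' c 0 = a c" using p by (simp add: pathok_def NF_def a'_def)
      show "NF T' c n = b c" using p by (simp add: pathok_def NF_def)
    next
      fix s assume s: "s < n"
      define u where "u = n - Suc s"
      have ns: "n - s = Suc u" "n - Suc s = u" "u < n" using s by (auto simp: u_def)
      have "kap b a' T' c u \<le> kap b a' T' c (Suc u)" "kap b a' T' c (Suc u) \<le> kap b a' T' c u + 1"
        using p ns(3) unfolding pathok_def by auto
      then show "NF T' c s \<le> NF T' c (Suc s)" "NF T' c (Suc s) \<le> NF T' c s + 1"
        unfolding NF_def ns by auto
    qed
  qed
  have rF: "\<forall>c\<in>C. \<forall>c'\<in>C. c < c' \<longrightarrow> (\<forall>t\<le>n. NF T' c' t \<le> NF T' c t)" if T': "T' \<in> ssyt n D'" for T'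
    using ssyt_row[OF gd' T'[unfolded D'_def]] unfolding NF_def by auto
  have pG: "\<forall>c\<in>C. pathok n (b c) (a' c) (NG T c)" if T: "T \<in> ssyt n D" for T
  proof
    fix c assume c: "c \<in> C"
    have p: "pathok n (a c) (b c) (kap a b T c)"
      unfolding kap_def using cnt_path ssyt_colok[OF T[unfolded D_def] c] good_ab[OF gd c] by auto
    show "pathok n (b c) (a' c) (NG T c)"
      unfolding pathok_def
    proof (intro conjI allI impI)
      show "NG T c 0 = b c" using p by (simp add: pathok_def NG_def)
      show "NG T c n = a' c" using p by (simp add: pathok_def NG_def a'_def)
    next
      fix s assume s: "s < n"
      define u where "u = n - Suc s"
      have ns: "n - s = Suc u" "n - Suc s = u" "u < n" using s by (auto simp: u_def)
      have "kap a b T c u \<le> kap a b T c (Suc u)" "kap a b T c (Suc u) \<le> kap a b T c u + 1"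
        using p ns(3) unfolding pathok_def by auto
      then show "NG T c s \<le> NG T c (Suc s)" "NG T c (Suc s) \<le> NG T c s + 1"
        unfolding NG_def ns by auto
    qed
  qed
  have rG: "\<forall>c\<in>C. \<forall>c'\<in>C. c < c' \<longrightarrow> (\<forall>t\<le>n. NG T c' t \<le> NG T c t)" if T: "T \<in> ssyt n D" for T
    using ssyt_row[OF gd T[unfolded D_def]] unfolding NG_def by auto
  have Fin: "F T' \<in> ssyt n D" if "T' \<in> ssyt n D'" for T'
    unfolding F_def D_def by (rule build_ssyt[OF gd pF[OF that] rF[OF that]])
  have Gin: "G T \<in> ssyt n D'" if "T \<in> ssyt n D" for T
    unfolding G_def D'_def by (rule build_ssyt[OF gd' pG[OF that] rG[OF that]])
  have kF: "kap a b (F T') c s = NF T' c s" if "T' \<in> ssyt n D'" "c \<in> C" "s \<le> n" for T' c s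
    unfolding F_def by (rule kap_build[OF pF[OF that(1)] that(2,3)])
  have kG: "kap b a' (G T) c s = NG T c s" if "T \<in> ssyt n D" "c \<in> C" "s \<le> n" for T c s
    unfolding G_def by (rule kap_build[OF pG[OF that(1)] that(2,3)])
  have GF: "G (F T') = T'" if T': "T' \<in> ssyt n D'" for T'
    unfolding G_def
  proof (rule build_kap[OF T'[unfolded D'_def] gd'], intro ballI allI impI)
    fix c t assume "c \<in> C" "t \<le> n"
    then show "NG (F T') c t = kap b a' T' c t"
      unfolding NG_def using kF[OF T', of c "n - t"] by (simp add: NF_def)
  qed
  have FG: "F (G T) = T" if T: "T \<in> ssyt n D" for T
    unfolding F_def
  proof (rule build_kap[OF T[unfolded D_def] gd], intro ballI allI impI)
    fix c t assume "c \<in> C" "t \<le> n"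
    then show "NF (G T) c t = kap a b T c t"
      unfolding NF_def using kG[OF T, of c "n - t"] by (simp add: NG_def)
  qed
  have bij: "bij_betw F (ssyt n D') (ssyt n D)"
    by (rule bij_betw_byWitness[where f'=G]) (use GF FG Fin Gin in auto)
  have le: "le (L_skew n D') S' T' \<longleftrightarrow> le (poset_sigma0 n (L_skew n D)) (F S') (F T')"
    if S': "S' \<in> ssyt n D'" and T': "T' \<in> ssyt n D'" for S' T'
  proof -
    have "le (L_skew n D') S' T' \<longleftrightarrow> (\<forall>c\<in>C. \<forall>t\<le>n. kap b a' S' c t \<le> kap b a' T' c t)"
      using ssyt_le[OF gd' S'[unfolded D'_def] T'[unfolded D'_def]] by (simp add: L_skew_def D'_def)
    also have "\<dots> \<longleftrightarrow> (\<forall>c\<in>C. \<forall>s\<le>n. NF S' c s \<le> NF T' c s)"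
      unfolding NF_def using reidx_all[of n "\<lambda>t. kap b a' S' c t \<le> kap b a' T' c t" for c] by auto
    also have "\<dots> \<longleftrightarrow> (\<forall>c\<in>C. \<forall>s\<le>n. kap a b (F S') c s \<le> kap a b (F T') c s)"
      using kF[OF S'] kF[OF T'] by auto
    also have "\<dots> \<longleftrightarrow> le (poset_sigma0 n (L_skew n D)) (F S') (F T')"
      using ssyt_le[OF gd Fin[OF S', unfolded D_def] Fin[OF T', unfolded D_def]]
      by (simp add: L_skew_def poset_sigma0_def D_def)
    finally show ?thesis .
  qed
  have ed: "edge (L_skew n D') S' i T' \<longleftrightarrow> edge (poset_sigma0 n (L_skew n D)) (F S') i (F T')"
    if S': "S' \<in> ssyt n D'" and T': "T' \<in> ssyt n D'" for S' T' i
  proof -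
    have "edge (L_skew n D') S' i T' \<longleftrightarrow>
      (i \<le> n \<and> (\<exists>c\<in>C. \<forall>c'\<in>C. \<forall>t\<le>n. kap b a' T' c' t = kap b a' S' c' t + (if c' = c \<and> t = i then 1 else 0)))"
      using edge_kap[OF gd' S'[unfolded D'_def] T'[unfolded D'_def]] S' T' by (simp add: L_skew_def D'_def)
    also have "\<dots> \<longleftrightarrow> (1 \<le> i \<and> i < n \<and> (\<exists>c\<in>C. \<forall>c'\<in>C. \<forall>t\<le>n. kap b a' T' c' t = kap b a' S' c' t + (if c' = c \<and> t = i then 1 else 0)))"
    proof
      assume A: "i \<le> n \<and> (\<exists>c\<in>C. \<forall>c'\<in>C. \<forall>t\<le>n. kap b a' T' c' t = kap b a' S' c' t + (if c' = c \<and> t = i then 1 else 0))"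
      show "1 \<le> i \<and> i < n \<and> (\<exists>c\<in>C. \<forall>c'\<in>C. \<forall>t\<le>n. kap b a' T' c' t = kap b a' S' c' t + (if c' = c \<and> t = i then 1 else 0))"
        using A edge_range[OF gd' S'[unfolded D'_def] T'[unfolded D'_def] A] by simp
    qed simp
    also have "\<dots> \<longleftrightarrow> (1 \<le> i \<and> i < n \<and> (\<exists>c\<in>C. \<forall>c'\<in>C. \<forall>s\<le>n. NF T' c' s = NF S' c' s + (if c' = c \<and> s = n - i then 1 else 0)))"
    proof (cases "1 \<le> i \<and> i < n")
      case True
      have R: "(\<forall>t\<le>n. kap b a' T' c' t = kap b a' S' c' t + (if c' = c \<and> t = i then 1 else 0)) \<longleftrightarrow>
         (\<forall>s\<le>n. NF T' c' s = NF S' c' s + (if c' = c \<and> s = n - i then 1 else 0))" for c c'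
        unfolding NF_def by (rule reidx_edge) (use True in simp)
      show ?thesis using True R by simp
    next
      case False then show ?thesis by blast
    qed
    also have "\<dots> \<longleftrightarrow> (1 \<le> i \<and> i < n \<and> (\<exists>c\<in>C. \<forall>c'\<in>C. \<forall>s\<le>n. kap a b (F T') c' s = kap a b (F S') c' s + (if c' = c \<and> s = n - i then 1 else 0)))"
      using kF[OF S'] kF[OF T'] by auto
    also have "\<dots> \<longleftrightarrow> edge (poset_sigma0 n (L_skew n D)) (F S') i (F T')"
      using edge_kap[OF gd Fin[OF S', unfolded D_def] Fin[OF T', unfolded D_def], of "n - i"]
        Fin[OF S'] Fin[OF T']
      by (auto simp add: L_skew_def poset_sigma0_def D_def)
    finally show ?thesis .
  qed
  show ?thesis
    unfolding cposet_iso_def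
    apply (rule exI[of _ F])
    using bij le ed by (simp add: L_skew_def D_def D'_def a'_def poset_sigma0_def)
qed




definition rho :: "cell \<Rightarrow> cell" where "rho = (\<lambda>(r, c). (- r, - c))"

lemma rho_rho[simp]: "rho (rho x) = x" unfolding rho_def by (cases x) auto

lemma rot180_rho: "rot180 D = rho ` D" unfolding rot180_def rho_def by simp

lemma mem_rot: "x \<in> rot180 D \<longleftrightarrow> rho x \<in> D"
  unfolding rot180_rho by (metis image_iff rho_rho)

lemma rot_rot: "rot180 (rot180 D) = D" by (auto simp: mem_rot)

lemma rho_pair[simp]: "rho (r, c) = (- r, - c)" by (simp add: rho_def)

definition flip :: "nat \<Rightarrow> cell set \<Rightarrow> filling \<Rightarrow> filling" where
  "flip n D T = (\<lambda>x. if x \<in> D then n + 1 - T (rho x) else 0)"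

lemma ssyt_val: "T \<in> ssyt n D \<Longrightarrow> x \<in> D \<Longrightarrow> 1 \<le> T x \<and> T x \<le> n"
  unfolding ssyt_def by auto

lemma flip_ssyt:
  assumes T: "T \<in> ssyt n (rot180 D)"
  shows "flip n D T \<in> ssyt n D"
  unfolding ssyt_def
proof (intro CollectI conjI allI ballI impI)
  fix x assume "x \<in> D"
  then have "rho x \<in> rot180 D" by (simp add: mem_rot)
  then have "1 \<le> T (rho x) \<and> T (rho x) \<le> n" by (rule ssyt_val[OF T])
  then show "1 \<le> flip n D T x" "flip n D T x \<le> n" using \<open>x \<in> D\<close>
    by (auto simp: flip_def)
next
  fix x assume "x \<notin> D" then show "flip n D T x = 0" by (simp add: flip_def)
next
  fix r c c' assume h: "(r, c) \<in> D" "(r, c') \<in> D" "c < c'"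
  then have "(- r, - c) \<in> rot180 D" "(- r, - c') \<in> rot180 D" by (auto simp: mem_rot)
  then have "T (- r, - c') \<le> T (- r, - c)" using T h(3) unfolding ssyt_def by auto
  then show "flip n D T (r, c) \<le> flip n D T (r, c')" using h by (simp add: flip_def)
next
  fix r r' c assume h: "(r, c) \<in> D" "(r', c) \<in> D" "r < r'"
  then have m: "(- r, - c) \<in> rot180 D" "(- r', - c) \<in> rot180 D" by (auto simp: mem_rot)
  then have "T (- r', - c) < T (- r, - c)" using T h(3) unfolding ssyt_def by auto
  moreover have "T (- r, - c) \<le> n" using ssyt_val[OF T m(1)] by simp
  ultimately show "flip n D T (r, c) < flip n D T (r', c)" using h by (simp add: flip_def)
qed

lemma flip_flip:
  assumes T: "T \<in> ssyt n (rot180 D)"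
  shows "flip n (rot180 D) (flip n D T) = T"
proof
  fix y show "flip n (rot180 D) (flip n D T) y = T y"
  proof (cases "y \<in> rot180 D")
    case True
    then show ?thesis using ssyt_val[OF T True] by (simp add: flip_def mem_rot)
  next
    case False
    then show ?thesis using ssyt_zero[OF T False] by (simp add: flip_def)
  qed
qed

theorem rot_iso:
  "cposet_iso (L_skew n (rot180 D)) (poset_dual (poset_sigma0 n (L_skew n D)))"
proof -
  define F where "F = flip n D"
  define G where "G = flip n (rot180 D)"
  have Fin: "F T \<in> ssyt n D" if "T \<in> ssyt n (rot180 D)" for T
    using flip_ssyt[OF that] by (simp add: F_def)
  have Gin: "G T \<in> ssyt n (rot180 D)" if "T \<in> ssyt n D" for T
    using flip_ssyt[of T n "rot180 D"] that by (simp add: G_def rot_rot)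
  have GF: "G (F T) = T" if "T \<in> ssyt n (rot180 D)" for T
    using flip_flip[OF that] by (simp add: F_def G_def)
  have FG: "F (G T) = T" if "T \<in> ssyt n D" for T
    using flip_flip[of T n "rot180 D"] that by (simp add: F_def G_def rot_rot)
  have bij: "bij_betw F (ssyt n (rot180 D)) (ssyt n D)"
    by (rule bij_betw_byWitness[where f'=G]) (use GF FG Fin Gin in auto)
  have le: "(\<forall>y\<in>rot180 D. T' y \<le> S' y) \<longleftrightarrow> (\<forall>x\<in>D. F S' x \<le> F T' x)"
    if S': "S' \<in> ssyt n (rot180 D)" and T': "T' \<in> ssyt n (rot180 D)" for S' T'
  proof
    assume H: "\<forall>y\<in>rot180 D. T' y \<le> S' y"
    show "\<forall>x\<in>D. F S' x \<le> F T' x"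
    proof
      fix x assume "x \<in> D"
      then have m: "rho x \<in> rot180 D" by (simp add: mem_rot)
      show "F S' x \<le> F T' x" using H m \<open>x \<in> D\<close> by (simp add: F_def flip_def diff_le_mono2)
    qed
  next
    assume H: "\<forall>x\<in>D. F S' x \<le> F T' x"
    show "\<forall>y\<in>rot180 D. T' y \<le> S' y"
    proof
      fix y assume m: "y \<in> rot180 D"
      then have "rho y \<in> D" by (simp add: mem_rot)
      then have "n + 1 - S' y \<le> n + 1 - T' y" using H[rule_format, of "rho y"] by (simp add: F_def flip_def)
      then show "T' y \<le> S' y" using ssyt_val[OF S' m] ssyt_val[OF T' m] by linarith
    qed
  qed
  have ed: "(\<exists>y\<in>rot180 D. S' y = T' y + 1 \<and> T' y = i \<and> (\<forall>z. z \<noteq> y \<longrightarrow> S' z = T' z)) \<longleftrightarrow>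
     (1 \<le> i \<and> i < n \<and> (\<exists>x\<in>D. F T' x = F S' x + 1 \<and> F S' x = n - i \<and> (\<forall>z. z \<noteq> x \<longrightarrow> F T' z = F S' z)))"
    if S': "S' \<in> ssyt n (rot180 D)" and T': "T' \<in> ssyt n (rot180 D)" for S' T' i
  proof
    assume "\<exists>y\<in>rot180 D. S' y = T' y + 1 \<and> T' y = i \<and> (\<forall>z. z \<noteq> y \<longrightarrow> S' z = T' z)"
    then obtain y where y: "y \<in> rot180 D" "S' y = T' y + 1" "T' y = i" and oth: "\<forall>z. z \<noteq> y \<longrightarrow> S' z = T' z" by blast
    have x: "rho y \<in> D" using y(1) by (simp add: mem_rot)
    have v: "1 \<le> i" "i < n" using ssyt_val[OF S' y(1)] ssyt_val[OF T' y(1)] y by auto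
    have "F T' z = F S' z" if "z \<noteq> rho y" for z
    proof -
      have "rho z \<noteq> y" using that by (metis rho_rho)
      then have "S' (rho z) = T' (rho z)" using oth by blast
      then show ?thesis by (simp add: F_def flip_def)
    qed
    then show "1 \<le> i \<and> i < n \<and> (\<exists>x\<in>D. F T' x = F S' x + 1 \<and> F S' x = n - i \<and> (\<forall>z. z \<noteq> x \<longrightarrow> F T' z = F S' z))"
      using v x y by (intro conjI bexI[of _ "rho y"]) (auto simp: F_def flip_def)
  next
    assume "1 \<le> i \<and> i < n \<and> (\<exists>x\<in>D. F T' x = F S' x + 1 \<and> F S' x = n - i \<and> (\<forall>z. z \<noteq> x \<longrightarrow> F T' z = F S' z))"
    then obtain x where v: "1 \<le> i" "i < n" and x: "x \<in> D" "F T' x = F S' x + 1" "F S' x = n - i"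
      and oth: "\<forall>z. z \<noteq> x \<longrightarrow> F T' z = F S' z" by blast
    have y: "rho x \<in> rot180 D" using x(1) by (simp add: mem_rot)
    have e: "n + 1 - T' (rho x) = n + 1 - S' (rho x) + 1" "n + 1 - S' (rho x) = n - i"
      using x by (simp_all add: F_def flip_def)
    have vals: "S' (rho x) = i + 1" "T' (rho x) = i"
      using e ssyt_val[OF S' y] ssyt_val[OF T' y] v by auto
    have "S' z = T' z" if "z \<noteq> rho x" for z
    proof (cases "z \<in> rot180 D")
      case True
      have "rho z \<noteq> x" using that by (metis rho_rho)
      then have "n + 1 - T' z = n + 1 - S' z" using oth[rule_format, of "rho z"] True
        by (simp add: F_def flip_def mem_rot)
      then show ?thesis using ssyt_val[OF S' True] ssyt_val[OF T' True] by linarith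
    next
      case False then show ?thesis using ssyt_zero[OF S' False] ssyt_zero[OF T' False] by simp
    qed
    then show "\<exists>y\<in>rot180 D. S' y = T' y + 1 \<and> T' y = i \<and> (\<forall>z. z \<noteq> y \<longrightarrow> S' z = T' z)"
      using y vals by (intro bexI[of _ "rho x"]) auto
  qed
  show ?thesis
    unfolding cposet_iso_def
  proof (rule exI[of _ F], intro conjI ballI allI)
    show "bij_betw F (carrier (L_skew n (rot180 D))) (carrier (poset_dual (poset_sigma0 n (L_skew n D))))"
      using bij by (simp add: L_skew_def poset_dual_def poset_sigma0_def)
  next
    fix x y assume "x \<in> carrier (L_skew n (rot180 D))" "y \<in> carrier (L_skew n (rot180 D))"
    then have xy: "x \<in> ssyt n (rot180 D)" "y \<in> ssyt n (rot180 D)" by (simp_all add: L_skew_def)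
    show "le (L_skew n (rot180 D)) x y = le (poset_dual (poset_sigma0 n (L_skew n D))) (F x) (F y)"
      using le[OF xy] by (simp add: L_skew_def poset_dual_def poset_sigma0_def)
    fix i
    show "edge (L_skew n (rot180 D)) x i y = edge (poset_dual (poset_sigma0 n (L_skew n D))) (F x) i (F y)"
      using ed[OF xy, of i] xy Fin[OF xy(1)] Fin[OF xy(2)]
      by (simp add: L_skew_def poset_dual_def poset_sigma0_def)
  qed
qed




lemma iso_refl: "cposet_iso R R"
  unfolding cposet_iso_def by (rule exI[of _ id]) simp

lemma iso_trans:
  assumes "cposet_iso R S" "cposet_iso S U" shows "cposet_iso R U"
proof -
  obtain f where f: "bij_betw f (carrier R) (carrier S)"
    "\<forall>x\<in>carrier R. \<forall>y\<in>carrier R. le R x y \<longleftrightarrow> le S (f x) (f y)"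
    "\<forall>x\<in>carrier R. \<forall>y\<in>carrier R. \<forall>i. edge R x i y \<longleftrightarrow> edge S (f x) i (f y)"
    using assms(1) unfolding cposet_iso_def by blast
  obtain g where g: "bij_betw g (carrier S) (carrier U)"
    "\<forall>x\<in>carrier S. \<forall>y\<in>carrier S. le S x y \<longleftrightarrow> le U (g x) (g y)"
    "\<forall>x\<in>carrier S. \<forall>y\<in>carrier S. \<forall>i. edge S x i y \<longleftrightarrow> edge U (g x) i (g y)"
    using assms(2) unfolding cposet_iso_def by blast
  have m: "x \<in> carrier R \<Longrightarrow> f x \<in> carrier S" for x using bij_betwE[OF f(1)] by blast
  show ?thesis unfolding cposet_iso_def
    apply (rule exI[of _ "g \<circ> f"])
    using bij_betw_trans[OF f(1) g(1)] f(2,3) g(2,3) m by simp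
qed

lemma iso_sigma0: "cposet_iso R S \<Longrightarrow> cposet_iso (poset_sigma0 n R) (poset_sigma0 n S)"
  unfolding cposet_iso_def poset_sigma0_def
  apply (elim exE) subgoal for f by (rule exI[of _ f]) simp done

lemma iso_dual: "cposet_iso R S \<Longrightarrow> cposet_iso (poset_dual R) (poset_dual S)"
  unfolding cposet_iso_def poset_dual_def
  apply (elim exE) subgoal for f by (rule exI[of _ f]) simp done

lemma sig_sig:
  assumes "\<And>x y i. edge R x i y \<Longrightarrow> 1 \<le> i \<and> i < n"
  shows "cposet_iso (poset_sigma0 n (poset_sigma0 n R)) R"
proof -
  have e: "(1 \<le> i \<and> i < n \<and> 1 \<le> n - i \<and> n - i < n \<and> edge R x (n - (n - i)) y) \<longleftrightarrow> edge R x i y" for x i y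
    using assms[of x i y] by (cases "edge R x i y") auto
  show ?thesis unfolding cposet_iso_def poset_sigma0_def
    by (rule exI[of _ id]) (use e in simp)
qed

lemma L_edge_range: "edge (L_skew n D) S i T \<Longrightarrow> 1 \<le> i \<and> i < n"
  unfolding L_skew_def ssyt_def by auto

definition twl :: "int \<Rightarrow> nat list \<Rightarrow> int" where
  "twl c xs = int (length (takeWhile (\<lambda>x. c \<le> int x) xs))"

lemma tw_iff:
  "sorted_wrt (\<ge>) xs \<Longrightarrow> j < length xs \<Longrightarrow> (c \<le> int (xs ! j) \<longleftrightarrow> j < length (takeWhile (\<lambda>x. c \<le> int x) xs))"
proof (induction xs arbitrary: j)
  case (Cons x xs)
  show ?case
  proof (cases j)
    case 0 then show ?thesis by simp
  next
    case (Suc j')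
    show ?thesis
    proof (cases "c \<le> int x")
      case True then show ?thesis using Cons Suc by simp
    next
      case False
      have "xs ! j' \<le> x" using Cons.prems Suc by auto
      then show ?thesis using False Suc by simp
    qed
  qed
qed simp

lemma tw_anti: "c \<le> c' \<Longrightarrow> length (takeWhile (\<lambda>x. c' \<le> int x) xs) \<le> length (takeWhile (\<lambda>x. c \<le> int x) xs)"
  by (induction xs) auto

lemma tw_len: "length (takeWhile P xs) \<le> length xs"
  by (induction xs) auto

lemma col_rows_cols:
  assumes "C = {c. a c < b c}"
  shows "col_rows (cols C a b) c = {a c<..b c}"
  using assms unfolding col_rows_def cols_def by auto

lemma sigma0_cols:
  assumes "C = {c. a c < b c}"
  shows "shape_sigma0 n (cols C a b) = cols C b (\<lambda>c. a c + int n)"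
proof -
  have mx: "Max {a c<..b c} = b c" "Min {a c<..b c} = a c + 1" if "a c < b c" for c
    using that by (auto intro!: Max_eqI Min_eqI)
  show ?thesis
    unfolding shape_sigma0_def col_rows_cols[OF assms]
    using mx assms by (auto simp: cols_def)
qed

theorem main_iso:
  fixes m n :: nat and P Q :: "nat list" and s :: sym
  assumes "2 \<le> n" and "n \<le> m"
    and lP: "length P = m" and lQ: "length Q = m"
    and sP: "sorted_wrt (\<ge>) P" and sQ: "sorted_wrt (\<ge>) Q"
    and QP: "\<forall>r<m. Q ! r \<le> P ! r"
    and cr: "\<forall>c. card (col_rows (skew_shape P Q) c) \<le> n"
  shows "cposet_iso (L_skew n (shape_op n s (skew_shape P Q)))
                    (poset_op n s (L_skew n (skew_shape P Q)))"
proof -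
  define a where "a c = twl c Q" for c
  define b where "b c = twl c P" for c
  define C where "C = {c. a c < b c}"
  have D: "skew_shape P Q = cols C a b"
  proof (rule set_eqI)
    fix x :: cell
    obtain r c where x: "x = (r, c)" by force
    show "x \<in> skew_shape P Q \<longleftrightarrow> x \<in> cols C a b"
    proof
      assume "x \<in> skew_shape P Q"
      then have h: "1 \<le> r" "r \<le> int m" "int (Q ! nat (r - 1)) < c" "c \<le> int (P ! nat (r - 1))"
        using x lP by (auto simp: skew_shape_def)
      define j where "j = nat (r - 1)"
      have j: "j < m" "r = int j + 1" using h by (auto simp: j_def)
      have jj: "nat (r - 1) = j" by (simp add: j_def)
      have h': "int (Q ! j) < c" "c \<le> int (P ! j)" using h(3,4) unfolding jj .
      have "j < length (takeWhile (\<lambda>x. c \<le> int x) P)" using tw_iff[OF sP, of j c] h' j(1) lP by simp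
      moreover have "\<not> j < length (takeWhile (\<lambda>x. c \<le> int x) Q)" using tw_iff[OF sQ, of j c] h' j(1) lQ by simp
      ultimately show "x \<in> cols C a b" using x j by (auto simp: cols_def C_def a_def b_def twl_def)
    next
      assume "x \<in> cols C a b"
      then have h: "a c < r" "r \<le> b c" using x by (auto simp: cols_def)
      have "0 \<le> a c" by (simp add: a_def twl_def)
      have "b c \<le> int m" using tw_len[of _ P] lP by (simp add: b_def twl_def)
      define j where "j = nat (r - 1)"
      have j: "j < m" "r = int j + 1" using h \<open>0 \<le> a c\<close> \<open>b c \<le> int m\<close> by (auto simp: j_def)
      have "c \<le> int (P ! j)" using tw_iff[OF sP, of j c] h j lP by (simp add: b_def twl_def)
      moreover have "\<not> c \<le> int (Q ! j)" using tw_iff[OF sQ, of j c] h j lQ by (simp add: a_def twl_def)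
      ultimately show "x \<in> skew_shape P Q" using x j lP by (auto simp: skew_shape_def)
    qed
  qed
  have gd: "good n C a b"
    unfolding good_def
  proof (intro conjI ballI impI)
    fix c assume c: "c \<in> C"
    then show "a c \<le> b c" by (simp add: C_def)
    have "card {a c<..b c} \<le> n" using cr[rule_format, of c] unfolding D col_rows_cols[OF C_def] .
    then show "b c \<le> a c + int n" by simp
  next
    fix c c' :: int assume "c < c'"
    then show "a c' \<le> a c" using tw_anti[of c c' Q] by (simp add: a_def twl_def)
  next
    fix c c' :: int assume "c < c'"
    then show "b c' \<le> b c" using tw_anti[of c c' P] by (simp add: b_def twl_def)
  qed
  show ?thesis
  proof (cases s)
    case Eps then show ?thesis by (simp add: iso_refl)
  next
    case Sigma0 then show ?thesis using sigma0_iso[OF gd] by (simp add: D sigma0_cols[OF C_def])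
  next
    case Bowtie then show ?thesis by (simp add: rot_iso)
  next
    case Star
    define D' where "D' = cols C b (\<lambda>c. a c + int n)"
    have 1: "cposet_iso (L_skew n (rot180 D')) (poset_dual (poset_sigma0 n (L_skew n D')))"
      by (rule rot_iso)
    have 2: "cposet_iso (poset_dual (poset_sigma0 n (L_skew n D'))) (poset_dual (poset_sigma0 n (poset_sigma0 n (L_skew n (cols C a b)))))"
      by (rule iso_dual, rule iso_sigma0, unfold D'_def, rule sigma0_iso[OF gd])
    have 3: "cposet_iso (poset_dual (poset_sigma0 n (poset_sigma0 n (L_skew n (cols C a b))))) (poset_dual (L_skew n (cols C a b)))"
      by (rule iso_dual, rule sig_sig, rule L_edge_range)
    show ?thesis using iso_trans[OF iso_trans[OF 1 2] 3] Star
      by (simp add: D sigma0_cols[OF C_def] D'_def)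
  qed
qed


theorem proposition8p2:
  fixes m n :: nat and P Q :: "nat list" and s :: sym
  assumes "2 \<le> n" and "n \<le> m"
    and "length P = m" and "length Q = m"
    and "sorted_wrt (\<ge>) P" and "sorted_wrt (\<ge>) Q"
    and "\<forall>r<m. Q ! r \<le> P ! r"
    and "\<forall>c. card (col_rows (skew_shape P Q) c) \<le> n"
  shows "cposet_iso (L_skew n (shape_op n s (skew_shape P Q)))
                    (poset_op n s (L_skew n (skew_shape P Q)))"
  by (rule main_iso[OF assms])

end
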